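(* Let $f:\mathbb{N}_+\to\mathbb{N}_+$. Then $L_{I(A_f)}(A_f)(x)=L_{\mathbb{N}_+}\big(n\mapsto\sum_{k=1}^n f(k)\big)^{-1}(x)$ for all $x\in\mathbb{R}_{\ge0}$.
   Context: The sequence "$n$ occurs $f(n)$ times", $A_f$, is defined by $A_f\big(m+\sum_{k=1}^n f(k)\big)=n$ for all integers $n\ge1$ and $0\le m<f(n+1)$, with the convention $A_f(m)=0$ for $0\le m<f(1)$. Its set of increase-indices is $I(A_f)=\{n\in\mathbb{N}_+: A_f(n-1)<A_f(n)\}$ (which equals $\{\sum_{k=1}^n f(k): n\ge1\}$). For a function $h$ defined on an infinite set $S\subseteq\mathbb{N}_+$ with values in $\mathbb{N}$, the linear interpolation $L_S(h):\mathbb{R}_{\ge0}\to\mathbb{R}_{\ge0}$ is the polygonal chain starting at $(0,0)$ and passing through the points $(n,h(n))$, $n\in S$, in increasing order of $n$. $L_{\mathbb{N}_+}(n\mapsto\sum_{k=1}^n f(k))$ is strictly increasing and unbounded, hence invertible on $\mathbb{R}_{\ge0}$. *)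

theory Defs
  imports "HOL-Analysis.Analysis" "HOL-Library.Infinite_Set"
begin

definition psum :: "(nat \<Rightarrow> nat) \<Rightarrow> nat \<Rightarrow> nat" where
  "psum f n = (\<Sum>k=1..n. f k)"

text \<open>The sequence "n occurs f(n) times": A_f(m + S_f(n)) = n for n >= 1, 0 <= m < f(n+1),
  and A_f(m) = 0 for 0 <= m < f(1).\<close>
definition seqA :: "(nat \<Rightarrow> nat) \<Rightarrow> nat \<Rightarrow> nat" where
  "seqA f m = (THE n. (n = 0 \<and> m < f 1) \<or>
                      (n \<ge> 1 \<and> (\<exists>m'. m' < f (n + 1) \<and> m = m' + psum f n)))"

definition incr_indices :: "(nat \<Rightarrow> nat) \<Rightarrow> nat set" where
  "incr_indices a = {n. n \<ge> 1 \<and> a (n - 1) < a n}"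

text \<open>Polygonal chain through the points (xs i, ys i), i = 0,1,2,..., with xs strictly
  increasing and unbounded: on [xs i, xs (i+1)) it is the segment joining the two points.\<close>
definition polygonal :: "(nat \<Rightarrow> real) \<Rightarrow> (nat \<Rightarrow> real) \<Rightarrow> real \<Rightarrow> real" where
  "polygonal xs ys x = (let i = (THE i. xs i \<le> x \<and> x < xs (Suc i)) in
      ys i + (ys (Suc i) - ys i) * (x - xs i) / (xs (Suc i) - xs i))"

text \<open>Linear interpolation L_S(h): the polygonal chain starting at (0,0) and passing through
  the points (n, h n), n in S, in increasing order of n (S an infinite subset of N_+;
  enumerate S lists the elements of S in increasing order).\<close>
definition lin_interp :: "nat set \<Rightarrow> (nat \<Rightarrow> nat) \<Rightarrow> real \<Rightarrow> real" where
  "lin_interp S h = polygonal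
      (\<lambda>i. if i = 0 then 0 else real (enumerate S (i - 1)))
      (\<lambda>i. if i = 0 then 0 else real (h (enumerate S (i - 1))))"

end

theory Submission
  imports Defs
begin

lemma enum_eq:
  fixes g :: "nat \<Rightarrow> nat"
  assumes sm: "strict_mono g" and S: "S = range g"
  shows "enumerate S n = g n"
proof -
  have inf: "infinite S" using S strict_mono_imp_inj_on[OF sm]
    by (metis finite_imageD infinite_UNIV_nat)
  show ?thesis
  proof (induction n)
    case 0
    have "(LEAST n. n \<in> S) = g 0"
    proof (rule Least_equality)
      show "g 0 \<in> S" using S by simp
      fix y assume "y \<in> S"
      then obtain k where "y = g k" using S by auto
      then show "g 0 \<le> y" using sm by (simp add: strict_mono_less_eq)
    qed
    then show ?case by (simp add: enumerate_0)
  next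
    case (Suc n)
    have "(LEAST s. s \<in> S \<and> g n < s) = g (Suc n)"
    proof (rule Least_equality)
      show "g (Suc n) \<in> S \<and> g n < g (Suc n)" using S sm by (auto simp: strict_mono_def)
      fix y assume "y \<in> S \<and> g n < y"
      then obtain k where k: "y = g k" "g n < g k" using S by auto
      then have "n < k" using sm by (simp add: strict_mono_less)
      then show "g (Suc n) \<le> y" using k sm by (simp add: strict_mono_less_eq)
    qed
    then show ?case using Suc enumerate_Suc''[OF inf, of n] by simp
  qed
qed

lemma psum_Suc: "psum f (Suc n) = psum f n + f (Suc n)"
  unfolding psum_def by simp

lemma psum_0: "psum f 0 = 0"
  unfolding psum_def by simp

lemma psum_sm:
  assumes "\<forall>n\<ge>1. f n \<ge> 1"
  shows "strict_mono (psum f)"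
proof -
  have "f (Suc n) \<ge> 1" for n using assms by simp
  then show ?thesis by (simp add: strict_mono_Suc_iff psum_Suc Suc_le_eq)
qed

lemma psum_uniq:
  assumes "\<forall>n\<ge>1. f n \<ge> 1"
    and "psum f n \<le> m" "m < psum f (Suc n)"
    and "psum f k \<le> m" "m < psum f (Suc k)"
  shows "k = n"
proof (rule ccontr)
  assume "k \<noteq> n"
  note sm = psum_sm[OF assms(1)]
  consider "Suc k \<le> n" | "Suc n \<le> k" using \<open>k \<noteq> n\<close> by linarith
  then show False
  proof cases
    case 1 then have "psum f (Suc k) \<le> psum f n" using sm by (simp add: strict_mono_less_eq)
    then show False using assms by linarith
  next
    case 2 then have "psum f (Suc n) \<le> psum f k" using sm by (simp add: strict_mono_less_eq)
    then show False using assms by linarith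
  qed
qed

lemma psum_ex:
  assumes "\<forall>n\<ge>1. f n \<ge> 1"
  shows "\<exists>n. psum f n \<le> m \<and> m < psum f (Suc n)"
proof -
  note sm = psum_sm[OF assms]
  have "Suc m \<le> psum f (Suc m)" using strict_mono_imp_increasing[OF sm, of "Suc m"] .
  then have ex: "\<exists>k. m < psum f k" by (intro exI[of _ "Suc m"]) simp
  define k where "k = (LEAST k. m < psum f k)"
  have k1: "m < psum f k" unfolding k_def using ex by (rule LeastI_ex)
  have "k \<noteq> 0"
  proof
    assume "k = 0" with k1 show False by (simp add: psum_0)
  qed
  then obtain n where n: "k = Suc n" by (cases k) auto
  have "n < (LEAST k. m < psum f k)" using n k_def by simp
  then have "\<not> m < psum f n" by (rule not_less_Least)
  then show ?thesis using k1 n by (intro exI[of _ n]) (simp add: not_less)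
qed

lemma seqA_eq:
  assumes "\<forall>n\<ge>1. f n \<ge> 1"
    and "psum f n \<le> m" "m < psum f (Suc n)"
  shows "seqA f m = n"
  unfolding seqA_def
proof (rule the_equality)
  show "n = 0 \<and> m < f 1 \<or> 1 \<le> n \<and> (\<exists>m'<f (n + 1). m = m' + psum f n)"
  proof (cases "n = 0")
    case True then show ?thesis using assms by (simp add: psum_Suc psum_0)
  next
    case False
    have "m - psum f n < f (n + 1)" using assms(2,3) by (simp add: psum_Suc)
    moreover have "m = (m - psum f n) + psum f n" using assms(2) by simp
    moreover have "1 \<le> n" using False by simp
    ultimately show ?thesis by blast
  qed
next
  fix k assume "k = 0 \<and> m < f 1 \<or> 1 \<le> k \<and> (\<exists>m'<f (k + 1). m = m' + psum f k)"
  then have "psum f k \<le> m \<and> m < psum f (Suc k)"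
    by (auto simp: psum_Suc psum_0)
  then show "k = n" using psum_uniq[OF assms(1) assms(2,3)] by blast
qed

lemma incr_eq:
  assumes A: "\<forall>n\<ge>1. f n \<ge> 1"
  shows "incr_indices (seqA f) = range (\<lambda>k. psum f (Suc k))"
proof (intro set_eqI iffI)
  fix n assume "n \<in> incr_indices (seqA f)"
  then have n1: "n \<ge> 1" and lt: "seqA f (n - 1) < seqA f n" by (auto simp: incr_indices_def)
  obtain j where j: "psum f j \<le> n" "n < psum f (Suc j)" using psum_ex[OF A] by blast
  have Aj: "seqA f n = j" using seqA_eq[OF A j] .
  show "n \<in> range (\<lambda>k. psum f (Suc k))"
  proof (cases "n = psum f j")
    case True
    have "j \<noteq> 0"
    proof
      assume "j = 0" with True n1 show False by (simp add: psum_0)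
    qed
    then obtain i where "j = Suc i" by (cases j) auto
    then show ?thesis using True by auto
  next
    case False
    then have "psum f j \<le> n - 1" "n - 1 < psum f (Suc j)" using j by auto
    then have "seqA f (n - 1) = j" using seqA_eq[OF A] by blast
    then show ?thesis using lt Aj by simp
  qed
next
  fix n assume "n \<in> range (\<lambda>k. psum f (Suc k))"
  then obtain k where n: "n = psum f (Suc k)" by auto
  have fk: "f (Suc k) \<ge> 1" using A by simp
  have n1: "n \<ge> 1" using n fk by (simp add: psum_Suc)
  have sm: "psum f (Suc k) < psum f (Suc (Suc k))" using psum_sm[OF A] by (simp add: strict_mono_def)
  have "seqA f n = Suc k" using seqA_eq[OF A, of "Suc k" n] n sm by simp
  moreover have "seqA f (n - 1) = k" using seqA_eq[OF A, of k "n - 1"] n fk by (simp add: psum_Suc)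
  ultimately show "n \<in> incr_indices (seqA f)" using n1 by (simp add: incr_indices_def)
qed

lemma polygonal_eq:
  assumes sm: "strict_mono xs" and x: "xs i \<le> x" "x < xs (Suc i)"
  shows "polygonal xs ys x = ys i + (ys (Suc i) - ys i) * (x - xs i) / (xs (Suc i) - xs i)"
proof -
  have "(THE i. xs i \<le> x \<and> x < xs (Suc i)) = i"
  proof (rule the_equality)
    show "xs i \<le> x \<and> x < xs (Suc i)" using x by simp
    fix j assume j: "xs j \<le> x \<and> x < xs (Suc j)"
    show "j = i"
    proof (rule ccontr)
      assume "j \<noteq> i"
      then consider "Suc j \<le> i" | "Suc i \<le> j" by linarith
      then show False
      proof cases
        case 1 then have "xs (Suc j) \<le> xs i" using sm by (simp add: strict_mono_less_eq)
        then show False using x j by linarith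
      next
        case 2 then have "xs (Suc i) \<le> xs j" using sm by (simp add: strict_mono_less_eq)
        then show False using x j by linarith
      qed
    qed
  qed
  then show ?thesis unfolding polygonal_def Let_def by simp
qed

theorem lemma2:
  fixes f :: "nat \<Rightarrow> nat"
  assumes "\<forall>n\<ge>1. f n \<ge> 1"
  shows "\<forall>x::real. x \<ge> 0 \<longrightarrow>
    lin_interp (incr_indices (seqA f)) (seqA f) x
      = inv_into {0..} (lin_interp {1..} (psum f)) x"
proof (intro allI impI)
  fix x :: real assume x0: "x \<ge> 0"
  note A = assms
  note sm = psum_sm[OF A]
  define P where "P = (\<lambda>i. real (psum f i))"
  have smP: "strict_mono P" using sm unfolding P_def strict_mono_def by simp
  have P0: "P 0 = 0" by (simp add: P_def psum_0)
  have PS: "P (Suc i) = P i + real (f (Suc i))" for i by (simp add: P_def psum_Suc)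
  have fpos: "real (f (Suc i)) > 0" for i
  proof -
    have "f (Suc i) \<ge> 1" using A by simp
    then show ?thesis by simp
  qed
  have en1: "enumerate (incr_indices (seqA f)) n = psum f (Suc n)" for n
    by (rule enum_eq[OF _ incr_eq[OF A]]) (use sm in \<open>simp add: strict_mono_def\<close>)
  have en2: "enumerate {1..} n = Suc n" for n
    by (rule enum_eq) (auto simp: strict_mono_def image_iff dest: Suc_le_D)
  have en2': "enumerate {Suc 0..} n = Suc n" for n using en2[of n] by simp
  have L1: "lin_interp (incr_indices (seqA f)) (seqA f) = polygonal P real"
  proof -
    have "(\<lambda>i. if i = 0 then 0 else real (enumerate (incr_indices (seqA f)) (i - 1))) = P"
      by (rule ext) (auto simp: en1 P_def psum_0)
    moreover have "(\<lambda>i. if i = 0 then 0 else real (seqA f (enumerate (incr_indices (seqA f)) (i - 1)))) = real"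
    proof (rule ext)
      fix i :: nat
      show "(if i = 0 then 0 else real (seqA f (enumerate (incr_indices (seqA f)) (i - 1)))) = real i"
      proof (cases i)
        case (Suc j)
        have "psum f (Suc j) < psum f (Suc (Suc j))" using sm by (simp add: strict_mono_def)
        then show ?thesis using Suc seqA_eq[OF A, of "Suc j" "psum f (Suc j)"] by (simp add: en1)
      qed simp
    qed
    ultimately show ?thesis unfolding lin_interp_def by simp
  qed
  define L where "L = lin_interp {1..} (psum f)"
  have L2: "L = polygonal real P"
  proof -
    have "(\<lambda>i. if i = 0 then 0 else real (enumerate {1::nat..} (i - 1))) = real"
      by (rule ext) (auto simp: en2')
    moreover have "(\<lambda>i. if i = 0 then 0 else real (psum f (enumerate {1..} (i - 1)))) = P"
      by (rule ext) (auto simp: en2' P_def psum_0)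
    ultimately show ?thesis unfolding lin_interp_def L_def by simp
  qed
  have smR: "strict_mono (real :: nat \<Rightarrow> real)" by (simp add: strict_mono_def)
  have Lval: "L a = P j + real (f (Suc j)) * (a - j)" if "real j \<le> a" "a < real (Suc j)" for a j
    unfolding L2 using polygonal_eq[OF smR that, of P] by (simp add: PS)
  have Lfl: "L a = P (nat \<lfloor>a\<rfloor>) + real (f (Suc (nat \<lfloor>a\<rfloor>))) * (a - nat \<lfloor>a\<rfloor>)"
     "real (nat \<lfloor>a\<rfloor>) \<le> a" "a < real (Suc (nat \<lfloor>a\<rfloor>))" if "a \<ge> 0" for a
  proof -
    show 1: "real (nat \<lfloor>a\<rfloor>) \<le> a" using that by linarith
    show 2: "a < real (Suc (nat \<lfloor>a\<rfloor>))" using that by linarith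
    show "L a = P (nat \<lfloor>a\<rfloor>) + real (f (Suc (nat \<lfloor>a\<rfloor>))) * (a - nat \<lfloor>a\<rfloor>)"
      by (rule Lval[OF 1 2])
  qed
  have Lless: "L a < L b" if ab: "0 \<le> a" "a < b" for a b
  proof -
    define j where "j = nat \<lfloor>a\<rfloor>"
    define k where "k = nat \<lfloor>b\<rfloor>"
    have b0: "b \<ge> 0" using ab by simp
    note ja = Lfl[OF ab(1), folded j_def]
    note kb = Lfl[OF b0, folded k_def]
    have jk: "j \<le> k" unfolding j_def k_def using ab by (simp add: floor_mono nat_mono)
    show ?thesis
    proof (cases "j = k")
      case True
      then show ?thesis using ja kb ab fpos[of j] by (simp add: mult_strict_left_mono)
    next
      case False
      then have "Suc j \<le> k" using jk by simp
      then have "P (Suc j) \<le> P k" using smP by (simp add: strict_mono_less_eq)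
      moreover have "L a < P (Suc j)"
      proof -
        have "real (f (Suc j)) * (a - j) < real (f (Suc j)) * 1"
          using ja fpos[of j] by (intro mult_strict_left_mono) auto
        then show ?thesis using ja(1) PS[of j] by simp
      qed
      moreover have "P k \<le> L b" using kb fpos[of k] by simp
      ultimately show ?thesis by simp
    qed
  qed
  have inj: "inj_on L {0..}"
  proof (rule inj_onI)
    fix a b assume "a \<in> {0::real..}" "b \<in> {0::real..}" "L a = L b"
    then show "a = b" using Lless[of a b] Lless[of b a] by (cases a b rule: linorder_cases) auto
  qed
  obtain i where i: "psum f i \<le> nat \<lfloor>x\<rfloor>" "nat \<lfloor>x\<rfloor> < psum f (Suc i)"
    using psum_ex[OF A] by blast
  have xi1: "P i \<le> x"
  proof -
    have "real (psum f i) \<le> real (nat \<lfloor>x\<rfloor>)" using i(1) by simp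
    moreover have "real (nat \<lfloor>x\<rfloor>) \<le> x" using x0 by linarith
    ultimately show ?thesis unfolding P_def by linarith
  qed
  have xi2: "x < P (Suc i)"
  proof -
    have "real (nat \<lfloor>x\<rfloor>) + 1 \<le> real (psum f (Suc i))" using i(2) by linarith
    moreover have "x < real (nat \<lfloor>x\<rfloor>) + 1" using x0 by linarith
    ultimately show ?thesis unfolding P_def by linarith
  qed
  define d where "d = real (f (Suc i))"
  have d0: "d > 0" unfolding d_def using fpos .
  define t where "t = real i + (x - P i) / d"
  have lhs: "lin_interp (incr_indices (seqA f)) (seqA f) x = t"
    unfolding L1 t_def using polygonal_eq[OF smP xi1 xi2, of real] by (simp add: PS d_def)
  have q: "0 \<le> (x - P i) / d" "(x - P i) / d < 1" using xi1 xi2 d0 PS[of i]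
    by (auto simp: d_def divide_less_eq)
  have t1: "real i \<le> t" "t < real (Suc i)" using q unfolding t_def by auto
  have Lt: "L t = x" using Lval[OF t1] d0 unfolding t_def d_def[symmetric] by simp
  have "inv_into {0..} L x = t"
    by (rule inv_into_f_eq[OF inj _ Lt]) (use t1 in auto)
  then show "lin_interp (incr_indices (seqA f)) (seqA f) x
      = inv_into {0..} (lin_interp {1..} (psum f)) x" using lhs L_def by simp
qed

end
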